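(* Let $u,v\in\mathfrak{U}(\mathbb{R})$ be such that each is the restriction to $[-\beta,\beta]$ of an element of $\mathcal{C}^1(\mathbb{R})^*$, and let $\gamma_n<\gamma_m$ be in $\Gamma$. Then $$\int_{\gamma_n}^{\gamma_m}Du(x)v(x)\,dx=-\int_{\gamma_n}^{\gamma_m}u(x)Dv(x)\,dx+u^-(\gamma_m)v^-(\gamma_m)-u^+(\gamma_n)v^+(\gamma_n).$$
   Context: Framework (Λ-limits / nonstandard analysis): $\mathfrak{X}=\mathcal{P}_{fin}(\mathfrak{F}(\mathbb{R},\mathbb{R}))$ directed by inclusion; $\mathbb{R}^*\supset\mathbb{R}$ is a non-Archimedean ordered field of Λ-limits of nets $\mathfrak{X}\to\mathbb{R}$; internal sets/functions, natural extensions $E^*,f^*$, hyperfinite sums are defined via Λ-limits; for internal $u$, $\int_a^bu\,dx$ means $(\int_a^b)^*u\,dx$. For $\lambda\in\mathfrak{X}$, $V_\lambda$ is the span of $\lambda$; an internal $u=\lim_{\lambda\uparrow\Lambda}u_\lambda$ is an ultrafunction if $u_\lambda\in V_\lambda$ for all $\lambda$; for a vector space $W$ of real functions, $\widetilde{W}=W^*\cap\{\text{ultrafunctions}\}$. Grid: a positive infinite $\beta\in\mathbb{R}^*$, a hyperfinite $\Gamma=\{\gamma_0<\dots<\gamma_\ell\}\subset\mathbb{R}^*$ with $\gamma_0=-\beta$, $\gamma_\ell=\beta$, $0<\gamma_{j+1}-\gamma_j<\eta$ for a fixed infinitesimal $\eta$, and $\mathbb{R}\subseteq\Gamma$; $\mathbb{I}_j=(\gamma_j,\gamma_{j+1})_{\mathbb{R}^*}$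 with characteristic function $\chi_j$. $\mathfrak{U}(\mathbb{R})$: functions $u:[-\beta,\beta]\to\mathbb{R}^*$ of the form $\sum_{j=0}^{\ell-1}v_j\chi_j$ with $v_j\in\widetilde{\mathcal{C}^1(\mathbb{R})}$, with the $L^2$ inner product $\int^*uv$. $u^\pm(\gamma_j)=u(\gamma_j^\pm)$ are internal one-sided limits at grid points; values at grid points: $u(\gamma_j)=\tfrac12(u(\gamma_j^+)+u(\gamma_j^-))$ for $1\le j\le\ell-1$, $u(-\beta)=u(\gamma_0^+)$, $u(\beta)=u(\gamma_\ell^-)$. For $q\in[-\beta,\beta]$, $\delta_q$ is the unique element of $\mathfrak{U}(\mathbb{R})$ with $\int^*w\delta_q=w(q)$ for all $w\in\mathfrak{U}(\mathbb{R})$. Derivative: for $u=\sum_jv_j\chi_j\in\mathfrak{U}(\mathbb{R})$, $u'=\sum_jv_j'\chi_j$, $P_{\mathfrak{U}}$ the orthogonal projection onto $\mathfrak{U}(\mathbb{R})$, $\triangle u(\gamma_j)=u(\gamma_j^+)-u(\gamma_j^-)$, and $Du=P_{\mathfrak{U}}u'+\sum_{j=1}^{\ell-1}\triangle u(\gamma_j)\delta_{\gamma_j}$. *)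

theory Defs
  imports "HOL-Analysis.Analysis"
begin

text \<open>The index set X = P_fin(F(R,R)) is modelled by the type
  of sets of real functions; a Lambda-limit is given by a fine ultrafilter on X
  (concentrated on finite sets).  Internal objects (hyperreals, hypernaturals, internal
  functions, internal sequences) are nets indexed by lambda, and an internal equation
  holds iff it holds eventually along the ultrafilter.\<close>

type_synonym idx = "(real \<Rightarrow> real) set"

definition Lambda_filter :: "idx filter \<Rightarrow> bool" where
  "Lambda_filter F \<longleftrightarrow> F \<noteq> bot \<and>
     (\<forall>P. eventually P F \<or> eventually (\<lambda>x. \<not> P x) F) \<and>
     (\<forall>l. finite l \<longrightarrow> eventually (\<lambda>mu. finite mu \<and> l \<subseteq> mu) F)"

definition Vspan :: "idx \<Rightarrow> (real \<Rightarrow> real) set" where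
  "Vspan l = {g. \<exists>c. g = (\<lambda>x. \<Sum>h\<in>l. c h * h x)}"

definition C1fun :: "(real \<Rightarrow> real) \<Rightarrow> bool" where
  "C1fun f \<longleftrightarrow> (\<forall>x. f differentiable (at x)) \<and> continuous_on UNIV (deriv f)"

text \<open>Standard (per-index) versions of the constructions; the grid is
  gamma 0 < ... < gamma ell, and the pieces are the open intervals.\<close>

definition pw :: "nat \<Rightarrow> (nat \<Rightarrow> real) \<Rightarrow> (nat \<Rightarrow> real \<Rightarrow> real) \<Rightarrow> real \<Rightarrow> real" where
  "pw ell gam c x = (\<Sum>j<ell. c j x * indicator {gam j<..<gam (Suc j)} x)"

definition rlim :: "(real \<Rightarrow> real) \<Rightarrow> real \<Rightarrow> real" where
  "rlim f a = Lim (at_right a) f"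

definition llim :: "(real \<Rightarrow> real) \<Rightarrow> real \<Rightarrow> real" where
  "llim f a = Lim (at_left a) f"

definition gval :: "nat \<Rightarrow> (nat \<Rightarrow> real) \<Rightarrow> (real \<Rightarrow> real) \<Rightarrow> real \<Rightarrow> real" where
  "gval ell gam w x =
     (if x = gam 0 then rlim w x
      else if x = gam ell then llim w x
      else if (\<exists>j\<in>{1..<ell}. x = gam j) then (rlim w x + llim w x) / 2
      else w x)"

definition Usp :: "idx \<Rightarrow> nat \<Rightarrow> (nat \<Rightarrow> real) \<Rightarrow> (real \<Rightarrow> real) set" where
  "Usp l ell gam = {pw ell gam c | c. \<forall>j<ell. c j \<in> Vspan l \<and> C1fun (c j)}"

definition delta :: "idx \<Rightarrow> real \<Rightarrow> nat \<Rightarrow> (nat \<Rightarrow> real) \<Rightarrow> real \<Rightarrow> real \<Rightarrow> real" where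
  "delta l b ell gam q = (THE d. d \<in> Usp l ell gam \<and>
     (\<forall>w\<in>Usp l ell gam. integral {-b..b} (\<lambda>x. w x * d x) = gval ell gam w q))"

definition Pproj :: "idx \<Rightarrow> real \<Rightarrow> nat \<Rightarrow> (nat \<Rightarrow> real) \<Rightarrow> (real \<Rightarrow> real) \<Rightarrow> real \<Rightarrow> real" where
  "Pproj l b ell gam f = (THE p. p \<in> Usp l ell gam \<and>
     (\<forall>w\<in>Usp l ell gam. integral {-b..b} (\<lambda>x. (f x - p x) * w x) = 0))"

definition Dop :: "idx \<Rightarrow> real \<Rightarrow> nat \<Rightarrow> (nat \<Rightarrow> real) \<Rightarrow> (nat \<Rightarrow> real \<Rightarrow> real) \<Rightarrow> real \<Rightarrow> real" where
  "Dop l b ell gam c x =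
     Pproj l b ell gam (pw ell gam (\<lambda>j. deriv (c j))) x +
     (\<Sum>j\<in>{1..<ell}. (rlim (pw ell gam c) (gam j) - llim (pw ell gam c) (gam j))
                        * delta l b ell gam (gam j) x)"

end

theory Submission
  imports Defs "HOL-Library.Function_Algebras"
begin


context
  fixes ell :: nat and gam :: "nat \<Rightarrow> real"
  assumes incr: "\<forall>j<ell. gam j < gam (Suc j)"
begin

lemma gam_mono: "i < j \<Longrightarrow> j \<le> ell \<Longrightarrow> gam i < gam j"
proof (induction j)
  case 0 then show ?case by simp
next
  case (Suc j)
  then show ?case using incr
    by (metis Suc_le_lessD dual_order.strict_trans less_Suc_eq less_imp_le_nat)
qed

lemma gam_mono_le: "i \<le> j \<Longrightarrow> j \<le> ell \<Longrightarrow> gam i \<le> gam j"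
  using gam_mono by (metis le_less)

lemma notgrid: "k<ell \<Longrightarrow> x \<in> {gam k<..<gam (Suc k)} \<Longrightarrow> j \<le> ell \<Longrightarrow> x \<noteq> gam j"
proof -
  assume a: "k<ell" "x \<in> {gam k<..<gam (Suc k)}" "j \<le> ell"
  show ?thesis
  proof (cases "j \<le> k")
    case True then have "gam j \<le> gam k" using a gam_mono_le by simp
    then show ?thesis using a by auto
  next
    case False then have "gam (Suc k) \<le> gam j" using a gam_mono_le by simp
    then show ?thesis using a by auto
  qed
qed

lemma disj_int: "j<ell \<Longrightarrow> k<ell \<Longrightarrow> j \<noteq> k \<Longrightarrow> x \<in> {gam k<..<gam (Suc k)} \<Longrightarrow> x \<notin> {gam j<..<gam (Suc j)}"
proof -
  assume a: "j<ell" "k<ell" "j \<noteq> k" "x \<in> {gam k<..<gam (Suc k)}"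
  show ?thesis
  proof (cases "j < k")
    case True then have "gam (Suc j) \<le> gam k" using a gam_mono_le by simp
    then show ?thesis using a by auto
  next
    case False then have "gam (Suc k) \<le> gam j" using a gam_mono_le by simp
    then show ?thesis using a by auto
  qed
qed

lemma pw_at: "k<ell \<Longrightarrow> x \<in> {gam k<..<gam (Suc k)} \<Longrightarrow> pw ell gam c x = c k x"
proof -
  assume a: "k<ell" "x \<in> {gam k<..<gam (Suc k)}"
  have "pw ell gam c x = c k x * indicator {gam k<..<gam (Suc k)} x +
     (\<Sum>j\<in>{..<ell}-{k}. c j x * indicator {gam j<..<gam (Suc j)} x)"
    unfolding pw_def by (rule sum.remove) (use a in auto)
  also have "(\<Sum>j\<in>{..<ell}-{k}. c j x * indicator {gam j<..<gam (Suc j)} x) = 0"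
    using disj_int[OF _ a(1) _ a(2)] by (intro sum.neutral) auto
  finally show ?thesis using a by simp
qed

lemma pw_out: "(\<forall>k<ell. x \<notin> {gam k<..<gam (Suc k)}) \<Longrightarrow> pw ell gam c x = 0"
  unfolding pw_def by (intro sum.neutral) auto

lemma find_int: "gam 0 \<le> x \<Longrightarrow> x \<le> gam ell \<Longrightarrow> (\<forall>j\<le>ell. x \<noteq> gam j) \<Longrightarrow> \<exists>k<ell. x \<in> {gam k<..<gam (Suc k)}"
proof -
  assume a: "gam 0 \<le> x" "x \<le> gam ell" "\<forall>j\<le>ell. x \<noteq> gam j"
  define S where "S = {j. j \<le> ell \<and> gam j < x}"
  have "0 \<in> S" using a unfolding S_def by force
  have fS: "finite S" unfolding S_def by simp
  define k where "k = Max S"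
  have kS: "k \<in> S" using fS \<open>0 \<in> S\<close> unfolding k_def by (intro Max_in) auto
  have k1: "k \<le> ell" "gam k < x" using kS unfolding S_def by auto
  have kl: "k < ell" using k1 a(2) by (cases "k = ell") auto
  have "Suc k \<notin> S" using fS kS unfolding k_def by (metis Max_ge Suc_n_not_le_n)
  then have "\<not> gam (Suc k) < x" "x \<noteq> gam (Suc k)" using kl a unfolding S_def by auto
  then have "x < gam (Suc k)" by auto
  then show ?thesis using kS kl unfolding S_def by auto
qed

end


lemma ind_integrable:
  assumes g: "continuous_on UNIV (g::real\<Rightarrow>real)"
  shows "(\<lambda>x. g x * indicator {a<..<c} x) integrable_on {s..t}"
proof -
  have I: "(\<lambda>x. if x \<in> {a..c} then g x else 0) integrable_on {s..t}"
    unfolding integrable_restrict_Int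
    by (metis Int_atLeastAtMost continuous_on_subset g integrable_continuous_interval subset_UNIV)
  show ?thesis
    by (rule integrable_spike_finite[of "{a,c}", OF _ _ I]) (auto simp: indicator_def)
qed

lemma ind_integral:
  assumes g: "continuous_on UNIV (g::real\<Rightarrow>real)" and sub: "{a..c} \<subseteq> {s..t}"
  shows "integral {s..t} (\<lambda>x. g x * indicator {a<..<c} x) = integral {a..c} g"
proof -
  have "integral {s..t} (\<lambda>x. g x * indicator {a<..<c} x) = integral {s..t} (\<lambda>x. if x \<in> {a..c} then g x else 0)"
    by (rule integral_spike[of "{a,c}"]) (auto simp: indicator_def)
  also have "\<dots> = integral ({a..c} \<inter> {s..t}) g"
    by (rule Henstock_Kurzweil_Integration.integral_restrict_Int)
  also have "{a..c} \<inter> {s..t} = {a..c}" using sub by auto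
  finally show ?thesis .
qed

lemma pw_integrable:
  assumes "\<forall>j<ell. continuous_on UNIV (e j)"
  shows "pw ell gam e integrable_on {s..t}"
proof -
  have "(\<lambda>x. \<Sum>j<ell. e j x * indicator {gam j<..<gam (Suc j)} x) integrable_on {s..t}"
    using assms by (intro integrable_sum ind_integrable) auto
  then show ?thesis unfolding pw_def[abs_def] .
qed

lemma pw_add: "pw ell gam (\<lambda>j x. c j x + d j x) x = pw ell gam c x + pw ell gam d x"
  unfolding pw_def by (simp add: sum.distrib distrib_right)

lemma pw_scale: "pw ell gam (\<lambda>j x. a * c j x) x = a * pw ell gam c x"
  unfolding pw_def by (simp only: sum_distrib_left mult.assoc)

lemma pw_diff: "pw ell gam (\<lambda>j x. c j x - d j x) x = pw ell gam c x - pw ell gam d x"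
  unfolding pw_def by (simp add: sum_subtractf left_diff_distrib)

lemma pw_zero: "pw ell gam (\<lambda>j x. 0) x = 0"
  unfolding pw_def by simp

lemma pw_cong: "(\<And>j. j < ell \<Longrightarrow> c j = d j) \<Longrightarrow> pw ell gam c = pw ell gam d"
  unfolding pw_def[abs_def] by (intro ext sum.cong) auto

lemma pw_mult:
  assumes incr: "\<forall>j<ell. gam j < gam (Suc j)"
  shows "pw ell gam c x * pw ell gam d x = pw ell gam (\<lambda>j x. c j x * d j x) x"
proof (cases "\<exists>k<ell. x \<in> {gam k<..<gam (Suc k)}")
  case True
  then obtain k where "k<ell" "x \<in> {gam k<..<gam (Suc k)}" by blast
  then show ?thesis using pw_at[OF incr] by metis
next
  case False
  then show ?thesis using pw_out[OF incr] by (metis mult_zero_left)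
qed

lemma sum_fun_apply: "(\<Sum>i\<in>A. (f i :: 'a \<Rightarrow> 'b::comm_monoid_add)) x = (\<Sum>i\<in>A. f i x)"
  by (induction A rule: infinite_finite_induct) (auto simp: plus_fun_def zero_fun_def)



definition PC :: "nat \<Rightarrow> (nat\<Rightarrow>real) \<Rightarrow> (real\<Rightarrow>real) \<Rightarrow> bool" where
  "PC ell gam g \<longleftrightarrow> (\<exists>c. g = pw ell gam c \<and> (\<forall>j<ell. continuous_on UNIV (c j)))"

definition ip :: "real \<Rightarrow> (real\<Rightarrow>real) \<Rightarrow> (real\<Rightarrow>real) \<Rightarrow> real" where
  "ip b g h = integral {-b..b} (\<lambda>x. g x * h x)"

definition scl :: "real \<Rightarrow> (real\<Rightarrow>real) \<Rightarrow> (real\<Rightarrow>real)" where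
  "scl a f = (\<lambda>x. a * f x)"

lemma PC_add: "PC ell gam g \<Longrightarrow> PC ell gam h \<Longrightarrow> PC ell gam (g + h)"
  unfolding PC_def
proof (elim exE conjE)
  fix c d assume "g = pw ell gam c" "\<forall>j<ell. continuous_on UNIV (c j)" "h = pw ell gam d" "\<forall>j<ell. continuous_on UNIV (d j)"
  then show "\<exists>e. g + h = pw ell gam e \<and> (\<forall>j<ell. continuous_on UNIV (e j))"
    by (intro exI[of _ "\<lambda>j x. c j x + d j x"]) (auto simp: pw_add plus_fun_def intro!: continuous_intros)
qed

lemma PC_diff: "PC ell gam g \<Longrightarrow> PC ell gam h \<Longrightarrow> PC ell gam (g - h)"
  unfolding PC_def
proof (elim exE conjE)
  fix c d assume "g = pw ell gam c" "\<forall>j<ell. continuous_on UNIV (c j)" "h = pw ell gam d" "\<forall>j<ell. continuous_on UNIV (d j)"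
  then show "\<exists>e. g - h = pw ell gam e \<and> (\<forall>j<ell. continuous_on UNIV (e j))"
    by (intro exI[of _ "\<lambda>j x. c j x - d j x"]) (auto simp: pw_diff fun_diff_def intro!: continuous_intros)
qed

lemma PC_scl: "PC ell gam g \<Longrightarrow> PC ell gam (scl a g)"
  unfolding PC_def
proof (elim exE conjE)
  fix c assume "g = pw ell gam c" "\<forall>j<ell. continuous_on UNIV (c j)"
  then show "\<exists>e. scl a g = pw ell gam e \<and> (\<forall>j<ell. continuous_on UNIV (e j))"
    by (intro exI[of _ "\<lambda>j x. a * c j x"]) (auto simp: pw_scale scl_def intro!: continuous_intros)
qed

lemma quad_aux:
  fixes A C t :: real
  assumes C0: "0 \<le> C" and ineq: "0 \<le> 2 * t * A + t * t * C" and td: "t = - A / (C + 1)"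
  shows "A = 0"
proof -
  have tc: "t * (C+1) = -A" using C0 td by simp
  have e: "(C + 1) * (C + 1) * (2 * t * A + t * t * C) = - A * A * (C + 2)"
    using tc by algebra
  moreover have "0 \<le> (C + 1) * (C + 1) * (2 * t * A + t * t * C)"
    using ineq C0 by simp
  ultimately have "A * A * (C + 2) \<le> 0" by linarith
  moreover have "0 < C + 2" using C0 by simp
  ultimately have "A * A \<le> 0" by (simp add: mult_le_0_iff)
  then show ?thesis by (metis linorder_neqE_linordered_idom mult_neg_neg mult_pos_pos not_le)
qed

context
  fixes ell :: nat and gam :: "nat \<Rightarrow> real"
  assumes incr: "\<forall>j<ell. gam j < gam (Suc j)"
begin

lemma PC_prod_integrable: "PC ell gam g \<Longrightarrow> PC ell gam h \<Longrightarrow> (\<lambda>x. g x * h x) integrable_on {s..t}"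
  unfolding PC_def
proof (elim exE conjE)
  fix c d assume "g = pw ell gam c" "\<forall>j<ell. continuous_on UNIV (c j)" "h = pw ell gam d" "\<forall>j<ell. continuous_on UNIV (d j)"
  moreover have "pw ell gam (\<lambda>j x. c j x * d j x) integrable_on {s..t}"
    using calculation by (intro pw_integrable) (auto intro!: continuous_intros)
  ultimately show ?thesis by (simp add: pw_mult[OF incr])
qed

lemma ip_add: "PC ell gam g \<Longrightarrow> PC ell gam h \<Longrightarrow> PC ell gam k \<Longrightarrow> ip b (g + h) k = ip b g k + ip b h k"
  unfolding ip_def plus_fun_def distrib_right
  by (intro integral_add PC_prod_integrable)

lemma ip_diff: "PC ell gam g \<Longrightarrow> PC ell gam h \<Longrightarrow> PC ell gam k \<Longrightarrow> ip b (g - h) k = ip b g k - ip b h k"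
  unfolding ip_def fun_diff_def left_diff_distrib
  by (intro integral_diff PC_prod_integrable)

lemma ip_scl: "ip b (scl a g) k = a * ip b g k"
  unfolding ip_def scl_def by (simp add: mult.assoc)

lemma ip_sym: "ip b g h = ip b h g"
  unfolding ip_def by (simp add: mult.commute)

lemma ip_nonneg: "PC ell gam g \<Longrightarrow> 0 \<le> ip b g g"
  unfolding ip_def by (intro integral_nonneg PC_prod_integrable) auto

lemma ip_zero_orth:
  assumes g: "PC ell gam g" and w: "PC ell gam w" and z: "ip b g g = 0"
  shows "ip b g w = 0"
proof -
  define A where "A = ip b g w"
  define C where "C = ip b w w"
  have C0: "0 \<le> C" unfolding C_def using ip_nonneg[where b=b, OF w] .
  define t where "t = - A / (C + 1)"
  have ws: "PC ell gam (scl t w)" using PC_scl[OF w] .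
  have h: "PC ell gam (g + scl t w)" using PC_add[OF g ws] .
  have "ip b (g + scl t w) (g + scl t w) = ip b g (g + scl t w) + t * ip b w (g + scl t w)"
    using ip_add[OF g ws h] ip_scl by simp
  also have "ip b g (g + scl t w) = ip b g g + t * ip b g w"
    using ip_sym ip_add[OF g ws g] ip_scl by metis
  also have "ip b w (g + scl t w) = ip b w g + t * ip b w w"
    using ip_sym ip_add[OF g ws w] ip_scl by metis
  finally have "ip b (g + scl t w) (g + scl t w) = 2 * t * A + t * t * C"
    using z ip_sym[of b w g] unfolding A_def C_def by (simp add: algebra_simps plus_fun_def)
  with ip_nonneg[where b=b, OF h] have ineq: "0 \<le> 2 * t * A + t * t * C" by simp
  have "A = 0" using quad_aux[OF C0 ineq t_def] .
  then show ?thesis unfolding A_def .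
qed

end


interpretation FV: vector_space scl
  by unfold_locales (auto simp: scl_def plus_fun_def algebra_simps)

lemma C1_cont: "C1fun f \<Longrightarrow> continuous_on UNIV f"
  unfolding C1fun_def
  by (intro differentiable_imp_continuous_on) (simp add: differentiable_on_def)

lemma C1_deriv: "C1fun f \<Longrightarrow> (f has_real_derivative deriv f x) (at x)"
  unfolding C1fun_def using DERIV_deriv_iff_real_differentiable by blast

lemma C1_zero: "C1fun (\<lambda>x. 0)"
proof -
  have "deriv (\<lambda>x::real. 0::real) = (\<lambda>x. 0)"
    by (intro ext DERIV_imp_deriv) (rule derivative_intros)
  then show ?thesis unfolding C1fun_def by simp
qed

lemma C1_add: "C1fun f \<Longrightarrow> C1fun g \<Longrightarrow> C1fun (\<lambda>x. f x + g x)"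
proof -
  assume f: "C1fun f" and g: "C1fun g"
  have d: "deriv (\<lambda>x. f x + g x) = (\<lambda>x. deriv f x + deriv g x)"
    by (intro ext DERIV_imp_deriv derivative_intros C1_deriv f g)
  have "\<forall>x. (\<lambda>x. f x + g x) differentiable (at x)"
    using f g unfolding C1fun_def by (auto intro: derivative_intros)
  then show ?thesis using f g unfolding C1fun_def d by (auto intro!: continuous_intros)
qed

lemma C1_scale: "C1fun f \<Longrightarrow> C1fun (\<lambda>x. a * f x)"
proof -
  assume f: "C1fun f"
  have d: "deriv (\<lambda>x. a * f x) = (\<lambda>x. a * deriv f x)"
    by (intro ext DERIV_imp_deriv DERIV_cmult C1_deriv f)
  have "\<forall>x. (\<lambda>x. a * f x) differentiable (at x)"
    using f unfolding C1fun_def by (auto intro: derivative_intros)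
  then show ?thesis using f unfolding C1fun_def d by (auto intro!: continuous_intros)
qed

lemma V_zero: "(\<lambda>x. 0) \<in> Vspan l"
  unfolding Vspan_def by (auto intro!: exI[of _ "\<lambda>h. 0"])

lemma V_add: "f \<in> Vspan l \<Longrightarrow> g \<in> Vspan l \<Longrightarrow> (\<lambda>x. f x + g x) \<in> Vspan l"
  unfolding Vspan_def
proof (elim CollectE exE, intro CollectI)
  fix c d assume "f = (\<lambda>x. \<Sum>h\<in>l. c h * h x)" "g = (\<lambda>x. \<Sum>h\<in>l. d h * h x)"
  then show "\<exists>e. (\<lambda>x. f x + g x) = (\<lambda>x. \<Sum>h\<in>l. e h * h x)"
    by (intro exI[of _ "\<lambda>h. c h + d h"]) (simp add: sum.distrib distrib_right)
qed

lemma V_scale: "f \<in> Vspan l \<Longrightarrow> (\<lambda>x. a * f x) \<in> Vspan l"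
  unfolding Vspan_def
proof (elim CollectE exE, intro CollectI)
  fix c assume "f = (\<lambda>x. \<Sum>h\<in>l. c h * h x)"
  then show "\<exists>e. (\<lambda>x. a * f x) = (\<lambda>x. \<Sum>h\<in>l. e h * h x)"
    by (intro exI[of _ "\<lambda>h. a * c h"]) (simp add: sum_distrib_left mult.assoc)
qed

lemma Usp_subspace: "FV.subspace (Usp l ell gam)"
proof (rule FV.subspaceI)
  have "(0::real\<Rightarrow>real) = pw ell gam (\<lambda>j x. 0)" by (rule ext) (simp add: pw_zero)
  then show "0 \<in> Usp l ell gam" unfolding Usp_def using V_zero C1_zero by blast
next
  fix f g assume "f \<in> Usp l ell gam" "g \<in> Usp l ell gam"
  then obtain c d where c: "f = pw ell gam c" "\<forall>j<ell. c j \<in> Vspan l \<and> C1fun (c j)"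
    and d: "g = pw ell gam d" "\<forall>j<ell. d j \<in> Vspan l \<and> C1fun (d j)"
    unfolding Usp_def by blast
  have "f + g = pw ell gam (\<lambda>j x. c j x + d j x)" using c d by (intro ext) (simp add: pw_add)
  then show "f + g \<in> Usp l ell gam" unfolding Usp_def using c d V_add C1_add by blast
next
  fix a f assume "f \<in> Usp l ell gam"
  then obtain c where c: "f = pw ell gam c" "\<forall>j<ell. c j \<in> Vspan l \<and> C1fun (c j)"
    unfolding Usp_def by blast
  have "scl a f = pw ell gam (\<lambda>j x. a * c j x)" using c by (intro ext) (simp add: pw_scale scl_def)
  then show "scl a f \<in> Usp l ell gam" unfolding Usp_def using c V_scale C1_scale by blast
qed

lemma Usp_PC: "f \<in> Usp l ell gam \<Longrightarrow> PC ell gam f"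
  unfolding Usp_def PC_def using C1_cont by blast

definition single :: "nat \<Rightarrow> (real\<Rightarrow>real) \<Rightarrow> nat \<Rightarrow> real \<Rightarrow> real" where
  "single k h = (\<lambda>j. if j = k then h else (\<lambda>x. 0))"

lemma pw_single: "k < ell \<Longrightarrow> pw ell gam (single k h) x = h x * indicator {gam k<..<gam (Suc k)} x"
proof -
  assume k: "k < ell"
  have "pw ell gam (single k h) x = (\<Sum>j<ell. if j = k then h x * indicator {gam k<..<gam (Suc k)} x else 0)"
    unfolding pw_def single_def by (intro sum.cong) auto
  also have "\<dots> = h x * indicator {gam k<..<gam (Suc k)} x" using k by (simp add: sum.delta)
  finally show ?thesis .
qed

lemma Usp_span:
  assumes fl: "finite l"
  shows "Usp l ell gam \<subseteq> FV.span ((\<lambda>(k,h). pw ell gam (single k h)) ` ({..<ell} \<times> l))"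
    (is "_ \<subseteq> FV.span ?G")
proof
  fix f assume "f \<in> Usp l ell gam"
  then obtain c where c: "f = pw ell gam c" "\<forall>j<ell. c j \<in> Vspan l \<and> C1fun (c j)"
    unfolding Usp_def by blast
  have "\<forall>j. \<exists>a. j < ell \<longrightarrow> c j = (\<lambda>x. \<Sum>h\<in>l. a h * h x)"
    using c(2) unfolding Vspan_def by blast
  then obtain a where a: "\<And>j. j < ell \<Longrightarrow> c j = (\<lambda>x. \<Sum>h\<in>l. a j h * h x)"
    by metis
  have eq: "f = (\<Sum>k<ell. \<Sum>h\<in>l. scl (a k h) (pw ell gam (single k h)))"
  proof
    fix x
    have "(\<Sum>k<ell. \<Sum>h\<in>l. scl (a k h) (pw ell gam (single k h))) x
        = (\<Sum>k<ell. \<Sum>h\<in>l. a k h * (h x * indicator {gam k<..<gam (Suc k)} x))"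
      by (simp add: sum_fun_apply scl_def pw_single)
    also have "\<dots> = (\<Sum>k<ell. c k x * indicator {gam k<..<gam (Suc k)} x)"
      using a by (simp add: sum_distrib_right mult.assoc)
    finally show "f x = (\<Sum>k<ell. \<Sum>h\<in>l. scl (a k h) (pw ell gam (single k h))) x"
      unfolding c(1) pw_def by simp
  qed
  show "f \<in> FV.span ?G" unfolding eq
    by (intro FV.span_sum FV.span_scale FV.span_base) auto
qed



context
  fixes b :: real and ell :: nat and gam :: "nat \<Rightarrow> real" and l :: idx
  assumes incr: "\<forall>j<ell. gam j < gam (Suc j)"
    and g0: "gam 0 = - b" and gell: "gam ell = b"
begin

lemma ip_add2: "PC ell gam g \<Longrightarrow> PC ell gam h \<Longrightarrow> PC ell gam k \<Longrightarrow> ip b k (g + h) = ip b k g + ip b k h"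
  using ip_add[OF incr] ip_sym[OF incr] by metis

lemma ip_zero2: "ip b g 0 = 0"
  unfolding ip_def by simp

lemma span_Usp: "B \<subseteq> Usp l ell gam \<Longrightarrow> FV.span B \<subseteq> Usp l ell gam"
  using FV.span_minimal[OF _ Usp_subspace] .

lemma orth_span:
  assumes g: "PC ell gam g" and B: "B \<subseteq> Usp l ell gam" and o: "\<forall>w\<in>B. ip b g w = 0"
    and w: "w \<in> FV.span B"
  shows "ip b g w = 0"
proof -
  let ?S = "{w. w \<in> Usp l ell gam \<and> ip b g w = 0}"
  have "FV.subspace ?S"
  proof (rule FV.subspaceI)
    show "0 \<in> ?S" using FV.subspace_0[OF Usp_subspace] ip_zero2 by auto
  next
    fix x y assume "x \<in> ?S" "y \<in> ?S"
    then show "x + y \<in> ?S" using FV.subspace_add[OF Usp_subspace] ip_add2[OF Usp_PC Usp_PC g] by auto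
  next
    fix c x assume "x \<in> ?S"
    then show "scl c x \<in> ?S" using FV.subspace_scale[OF Usp_subspace] ip_scl[OF incr] ip_sym[OF incr] by (metis (mono_tags, lifting) mem_Collect_eq mult_zero_right)
  qed
  moreover have "B \<subseteq> ?S" using B o by auto
  ultimately show ?thesis using FV.span_minimal w by blast
qed

lemma GS:
  assumes "finite B" "B \<subseteq> Usp l ell gam"
  shows "\<forall>f. PC ell gam f \<longrightarrow> (\<exists>p\<in>FV.span B. \<forall>w\<in>FV.span B. ip b (f - p) w = 0)"
  using assms
proof (induction B rule: finite_induct)
  case empty
  show ?case by (auto simp: ip_def)
next
  case (insert s B)
  have sU: "s \<in> Usp l ell gam" and BU: "B \<subseteq> Usp l ell gam" using insert.prems by auto
  have spB: "FV.span B \<subseteq> Usp l ell gam" using span_Usp[OF BU] .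
  have spI: "FV.span (insert s B) \<subseteq> Usp l ell gam" using span_Usp insert.prems .
  have IH: "\<And>f. PC ell gam f \<Longrightarrow> \<exists>p\<in>FV.span B. \<forall>w\<in>FV.span B. ip b (f - p) w = 0"
    using insert.IH[OF BU] by blast
  show ?case
  proof (intro allI impI)
    fix f assume f: "PC ell gam f"
    obtain p where p: "p \<in> FV.span B" "\<forall>w\<in>FV.span B. ip b (f - p) w = 0" using IH[OF f] by blast
    obtain q where q: "q \<in> FV.span B" "\<forall>w\<in>FV.span B. ip b (s - q) w = 0" using IH[OF Usp_PC[OF sU]] by blast
    define s' where "s' = s - q"
    have pP: "PC ell gam p" using p spB Usp_PC by blast
    have qP: "PC ell gam q" using q spB Usp_PC by blast
    have sP: "PC ell gam s" using Usp_PC[OF sU] .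
    have s'P: "PC ell gam s'" unfolding s'_def using PC_diff[OF sP qP] .
    have fpP: "PC ell gam (f - p)" using PC_diff[OF f pP] .
    have ss: "s = s' + q" unfolding s'_def by simp
    have s'B: "\<forall>w\<in>B. ip b s' w = 0" using q(2) FV.span_base unfolding s'_def by blast
    have s'q: "ip b s' q = 0" using q unfolding s'_def by blast
    have fpq: "ip b (f - p) q = 0" using p q by blast
    have qspan: "q \<in> FV.span (insert s B)" using q(1) FV.span_mono[of B "insert s B"] by blast
    have s'span: "s' \<in> FV.span (insert s B)" unfolding s'_def
      by (intro FV.span_diff FV.span_base qspan) auto
    have pspan: "p \<in> FV.span (insert s B)" using p(1) FV.span_mono[of B "insert s B"] by blast
    show "\<exists>p\<in>FV.span (insert s B). \<forall>w\<in>FV.span (insert s B). ip b (f - p) w = 0"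
    proof (cases "ip b s' s' = 0")
      case True
      have "\<forall>w\<in>insert s B. ip b (f - p) w = 0"
      proof
        fix w assume "w \<in> insert s B"
        then show "ip b (f - p) w = 0"
        proof
          assume ws: "w = s"
          have "ip b (f - p) s = ip b (f - p) s' + ip b (f - p) q"
            unfolding ss using ip_add2[OF s'P qP fpP] .
          also have "ip b (f - p) s' = 0" using ip_zero_orth[OF incr s'P fpP True] ip_sym[OF incr] by metis
          finally show ?thesis using ws fpq by (metis add.left_neutral)
        next
          assume "w \<in> B" then show ?thesis using p FV.span_base by blast
        qed
      qed
      then show ?thesis using orth_span[OF fpP insert.prems(1)] pspan by blast
    next
      case False
      define k where "k = ip b (f - p) s' / ip b s' s'"
      define p' where "p' = p + scl k s'"
      have p'span: "p' \<in> FV.span (insert s B)" unfolding p'_def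
        by (intro FV.span_add FV.span_scale pspan s'span)
      have fp': "f - p' = (f - p) - scl k s'" unfolding p'_def by (simp add: algebra_simps)
      have ksP: "PC ell gam (scl k s')" using PC_scl[OF s'P] .
      have fp'P: "PC ell gam (f - p')" unfolding fp' using PC_diff[OF fpP ksP] .
      have key: "ip b (f - p') w = ip b (f - p) w - k * ip b s' w" if "PC ell gam w" for w
        unfolding fp' using ip_diff[OF incr fpP ksP that] ip_scl[OF incr] by simp
      have "\<forall>w\<in>insert s B. ip b (f - p') w = 0"
      proof
        fix w assume "w \<in> insert s B"
        then show "ip b (f - p') w = 0"
        proof
          assume ws: "w = s"
          have a1: "ip b (f - p) s = ip b (f - p) s'"
            unfolding ss using ip_add2[OF s'P qP fpP] fpq by simp
          have a2: "ip b s' s = ip b s' s'"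
            unfolding ss using ip_add2[OF s'P qP s'P] s'q by simp
          show ?thesis using key[OF sP] a1 a2 False ws unfolding k_def by simp
        next
          assume wB: "w \<in> B"
          then have "PC ell gam w" using BU Usp_PC by blast
          then show ?thesis using key p s'B wB FV.span_base by auto
        qed
      qed
      then show ?thesis using orth_span[OF fp'P insert.prems(1)] p'span by blast
    qed
  qed
qed

end


context
  fixes b :: real and ell :: nat and gam :: "nat \<Rightarrow> real" and l :: idx
  assumes incr: "\<forall>j<ell. gam j < gam (Suc j)"
    and g0: "gam 0 = - b" and gell: "gam ell = b"
begin

lemma proj_exists:
  assumes fl: "finite l" and f: "PC ell gam f"
  shows "\<exists>p\<in>Usp l ell gam. \<forall>w\<in>Usp l ell gam. ip b (f - p) w = 0"
proof -
  obtain B where B: "B \<subseteq> Usp l ell gam" "FV.independent B" "Usp l ell gam \<subseteq> FV.span B"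
    by (rule FV.basis_exists[of "Usp l ell gam"])
  let ?G = "(\<lambda>(k,h). pw ell gam (single k h)) ` ({..<ell} \<times> l)"
  have fG: "finite ?G" using fl by (intro finite_imageI finite_cartesian_product) auto
  have "B \<subseteq> FV.span ?G" using B(1) Usp_span[OF fl] by (rule order_trans)
  then have fB: "finite B" using FV.independent_span_bound[OF fG B(2)] by (simp only:)
  have eq: "FV.span B = Usp l ell gam" using span_Usp[OF incr g0 gell B(1)] B(3) by (rule antisym)
  have "\<forall>f. PC ell gam f \<longrightarrow> (\<exists>p\<in>FV.span B. \<forall>w\<in>FV.span B. ip b (f - p) w = 0)"
    by (rule GS[OF incr g0 gell fB B(1)])
  then show ?thesis using f unfolding eq by (elim allE impE)
qed

lemma posdef:
  assumes dU: "d \<in> Usp l ell gam" and z: "ip b d d = 0"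
  shows "d = 0"
proof
  fix x
  obtain c where c: "d = pw ell gam c" "\<forall>j<ell. c j \<in> Vspan l \<and> C1fun (c j)"
    using dU unfolding Usp_def by blast
  show "d x = 0 x"
  proof (cases "\<exists>k<ell. x \<in> {gam k<..<gam (Suc k)}")
    case False
    then show ?thesis using pw_out[OF incr] c(1) by simp
  next
    case True
    then obtain k where k: "k < ell" "x \<in> {gam k<..<gam (Suc k)}" by blast
    define w where "w = pw ell gam (single k (c k))"
    have wU: "w \<in> Usp l ell gam" unfolding w_def Usp_def single_def
      using c(2) k(1) V_zero C1_zero by auto
    have o: "ip b d w = 0" using ip_zero_orth[OF incr Usp_PC[OF dU] Usp_PC[OF wU] z] .
    have pt: "d y * w y = (c k y * c k y) * indicator {gam k<..<gam (Suc k)} y" for y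
    proof (cases "y \<in> {gam k<..<gam (Suc k)}")
      case True
      then show ?thesis unfolding w_def c(1) using pw_at[OF incr k(1) True] by (simp add: single_def)
    next
      case False
      then show ?thesis unfolding w_def using pw_single[OF k(1)] by simp
    qed
    have cc: "continuous_on UNIV (\<lambda>y. c k y * c k y)"
      using C1_cont c(2) k(1) by (auto intro!: continuous_intros)
    have sub: "{gam k..gam (Suc k)} \<subseteq> {-b..b}"
      using gam_mono_le[OF incr, of 0 k] gam_mono_le[OF incr, of "Suc k" ell] k(1) g0 gell by auto
    have "integral {gam k..gam (Suc k)} (\<lambda>y. c k y * c k y) = 0"
      using o unfolding ip_def pt ind_integral[OF cc sub] .
    moreover have "gam k < gam (Suc k)" using incr k(1) by blast
    then have ne: "box (gam k) (gam (Suc k)) \<noteq> {}" by simp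
    moreover have "integral (cbox (gam k) (gam (Suc k))) (\<lambda>y. c k y * c k y) = 0 \<longleftrightarrow>
        (\<forall>y \<in> cbox (gam k) (gam (Suc k)). c k y * c k y = 0)"
      by (rule integral_cbox_eq_0_iff[OF continuous_on_subset[OF cc subset_UNIV] ne]) simp
    ultimately have "\<forall>y\<in>{gam k..gam (Suc k)}. c k y * c k y = 0"
      by simp
    then have "c k x = 0" using k(2) by auto
    then show ?thesis using pw_at[OF incr k] c(1) by simp
  qed
qed

lemma proj_unique:
  assumes p1: "p1 \<in> Usp l ell gam" "\<forall>w\<in>Usp l ell gam. ip b (f - p1) w = 0"
    and p2: "p2 \<in> Usp l ell gam" "\<forall>w\<in>Usp l ell gam. ip b (f - p2) w = 0"
    and f: "PC ell gam f"
  shows "p1 = p2"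
proof -
  have dU: "p1 - p2 \<in> Usp l ell gam" using FV.subspace_diff[OF Usp_subspace p1(1) p2(1)] .
  have P1: "PC ell gam (f - p1)" using PC_diff[OF f Usp_PC[OF p1(1)]] .
  have P2: "PC ell gam (f - p2)" using PC_diff[OF f Usp_PC[OF p2(1)]] .
  have e: "(f - p2) - (f - p1) = p1 - p2" by simp
  have "ip b ((f - p2) - (f - p1)) (p1 - p2) = ip b (f - p2) (p1 - p2) - ip b (f - p1) (p1 - p2)"
    by (rule ip_diff[OF incr P2 P1 Usp_PC[OF dU]])
  then have "ip b (p1 - p2) (p1 - p2) = ip b (f - p2) (p1 - p2) - ip b (f - p1) (p1 - p2)"
    unfolding e .
  also have "\<dots> = 0" using p1(2) p2(2) dU by simp
  finally have "p1 - p2 = 0" using posdef[OF dU] by simp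
  then show ?thesis by simp
qed

lemma Pproj_prop:
  assumes fl: "finite l" and f: "PC ell gam f"
  shows "Pproj l b ell gam f \<in> Usp l ell gam \<and>
    (\<forall>w\<in>Usp l ell gam. integral {-b..b} (\<lambda>x. (f x - Pproj l b ell gam f x) * w x) = 0)"
proof -
  have ipd: "ip b (f - p) w = integral {-b..b} (\<lambda>x. (f x - p x) * w x)" for p w
    unfolding ip_def by simp
  have "\<exists>!p. p \<in> Usp l ell gam \<and> (\<forall>w\<in>Usp l ell gam. integral {-b..b} (\<lambda>x. (f x - p x) * w x) = 0)"
  proof (rule ex_ex1I)
    obtain p where "p\<in>Usp l ell gam" "\<forall>w\<in>Usp l ell gam. ip b (f - p) w = 0"
      using proj_exists[OF fl f] by blast
    then show "\<exists>p. p \<in> Usp l ell gam \<and> (\<forall>w\<in>Usp l ell gam. integral {-b..b} (\<lambda>x. (f x - p x) * w x) = 0)"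
      by (simp only: ipd) blast
  next
    fix p1 p2
    assume A: "p1 \<in> Usp l ell gam \<and> (\<forall>w\<in>Usp l ell gam. integral {-b..b} (\<lambda>x. (f x - p1 x) * w x) = 0)"
      and B: "p2 \<in> Usp l ell gam \<and> (\<forall>w\<in>Usp l ell gam. integral {-b..b} (\<lambda>x. (f x - p2 x) * w x) = 0)"
    have A2: "\<forall>w\<in>Usp l ell gam. ip b (f - p1) w = 0" using conjunct2[OF A] by (simp only: ipd)
    have B2: "\<forall>w\<in>Usp l ell gam. ip b (f - p2) w = 0" using conjunct2[OF B] by (simp only: ipd)
    show "p1 = p2" by (rule proj_unique[OF conjunct1[OF A] A2 conjunct1[OF B] B2 f])
  qed
  then show ?thesis unfolding Pproj_def by (rule theI')
qed

end


lemma rlim_eq: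
  assumes a: "a < c" and eq: "\<forall>x\<in>{a<..<c}. w x = F x" and F: "isCont F a"
  shows "rlim w a = F a"
proof -
  have "(F \<longlongrightarrow> F a) (at_right a)" using F by (simp add: isCont_def filterlim_at_split)
  moreover have "eventually (\<lambda>x. F x = w x) (at_right a)"
    unfolding eventually_at_right_field using a eq by (intro exI[of _ c]) auto
  ultimately have "(w \<longlongrightarrow> F a) (at_right a)" by (rule Lim_transform_eventually)
  then show ?thesis unfolding rlim_def by (intro tendsto_Lim) auto
qed

lemma llim_eq:
  assumes a: "a < c" and eq: "\<forall>x\<in>{a<..<c}. w x = F x" and F: "isCont F c"
  shows "llim w c = F c"
proof -
  have "(F \<longlongrightarrow> F c) (at_left c)" using F by (simp add: isCont_def filterlim_at_split)
  moreover have "eventually (\<lambda>x. F x = w x) (at_left c)"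
    unfolding eventually_at_left_field using a eq by (intro exI[of _ a]) auto
  ultimately have "(w \<longlongrightarrow> F c) (at_left c)" by (rule Lim_transform_eventually)
  then show ?thesis unfolding llim_def by (intro tendsto_Lim) auto
qed

lemma C1_isCont: "C1fun f \<Longrightarrow> isCont f x"
  using C1_cont by (simp add: continuous_on_eq_continuous_at)

context
  fixes b :: real and ell :: nat and gam :: "nat \<Rightarrow> real"
  assumes incr: "\<forall>j<ell. gam j < gam (Suc j)"
    and g0: "gam 0 = - b" and gell: "gam ell = b"
begin

lemma gval_off: "k < ell \<Longrightarrow> x \<in> {gam k<..<gam (Suc k)} \<Longrightarrow> gval ell gam w x = w x"
proof -
  assume k: "k < ell" "x \<in> {gam k<..<gam (Suc k)}"
  have "\<forall>j\<le>ell. x \<noteq> gam j" using notgrid[OF incr k] by blast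
  then show ?thesis unfolding gval_def by auto
qed

lemma int_sub: "k < ell \<Longrightarrow> {gam k..gam (Suc k)} \<subseteq> {-b..b}"
  using gam_mono_le[OF incr, of 0 k] gam_mono_le[OF incr, of "Suc k" ell] g0 gell by auto

lemma coef_eq:
  assumes restr: "\<forall>x\<in>{- b..b}. gval ell gam (pw ell gam c) x = F x"
    and k: "k < ell" and x: "x \<in> {gam k<..<gam (Suc k)}"
  shows "c k x = F x"
proof -
  have "x \<in> {-b..b}" using int_sub[OF k] x by auto
  then have "F x = gval ell gam (pw ell gam c) x" using restr by simp
  also have "\<dots> = pw ell gam c x" using gval_off[OF k x] .
  also have "\<dots> = c k x" using pw_at[OF incr k x] .
  finally show ?thesis by simp
qed

lemma rlim_grid:
  assumes restr: "\<forall>x\<in>{- b..b}. gval ell gam (pw ell gam c) x = F x" and F: "C1fun F"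
    and k: "k < ell"
  shows "rlim (pw ell gam c) (gam k) = F (gam k)"
  using incr k by (intro rlim_eq[where c = "gam (Suc k)"] ballI C1_isCont F)
    (auto simp: pw_at[OF incr k] coef_eq[OF restr k])

lemma llim_grid:
  assumes restr: "\<forall>x\<in>{- b..b}. gval ell gam (pw ell gam c) x = F x" and F: "C1fun F"
    and k: "Suc k \<le> ell"
  shows "llim (pw ell gam c) (gam (Suc k)) = F (gam (Suc k))"
proof -
  have k': "k < ell" using k by simp
  show ?thesis
  using incr k' by (intro llim_eq[where a = "gam k"] ballI C1_isCont F)
    (auto simp: pw_at[OF incr k'] coef_eq[OF restr k'])
qed

lemma Dop_eq:
  assumes restr: "\<forall>x\<in>{- b..b}. gval ell gam (pw ell gam c) x = F x" and F: "C1fun F"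
  shows "Dop l b ell gam c x = Pproj l b ell gam (pw ell gam (\<lambda>j. deriv (c j))) x"
proof -
  have "\<forall>j\<in>{1..<ell}. rlim (pw ell gam c) (gam j) - llim (pw ell gam c) (gam j) = 0"
  proof
    fix j assume j: "j \<in> {1..<ell}"
    then obtain i where i: "j = Suc i" by (cases j) auto
    have "rlim (pw ell gam c) (gam j) = F (gam j)" using rlim_grid[OF restr F] j by simp
    moreover have "llim (pw ell gam c) (gam j) = F (gam j)" using llim_grid[OF restr F, of i] i j by simp
    ultimately show "rlim (pw ell gam c) (gam j) - llim (pw ell gam c) (gam j) = 0" by simp
  qed
  then show ?thesis unfolding Dop_def by simp
qed

definition restr :: "nat \<Rightarrow> nat \<Rightarrow> (nat \<Rightarrow> real \<Rightarrow> real) \<Rightarrow> nat \<Rightarrow> real \<Rightarrow> real" where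
  "restr n m c = (\<lambda>j. if n \<le> j \<and> j < m then c j else (\<lambda>x. 0))"

lemma restr_eq:
  assumes nm: "n \<le> m" "m \<le> ell"
  shows "pw ell gam (restr n m c) x = (if x \<in> {gam n..gam m} then pw ell gam c x else 0)"
proof (cases "\<exists>k<ell. x \<in> {gam k<..<gam (Suc k)}")
  case False
  then show ?thesis using pw_out[OF incr] by simp
next
  case True
  then obtain k where k: "k < ell" "x \<in> {gam k<..<gam (Suc k)}" by blast
  have iff: "x \<in> {gam n..gam m} \<longleftrightarrow> n \<le> k \<and> k < m"
  proof
    assume "x \<in> {gam n..gam m}"
    moreover have "k < n \<Longrightarrow> gam (Suc k) \<le> gam n" using gam_mono_le[OF incr, of "Suc k" n] nm by simp
    moreover have "m \<le> k \<Longrightarrow> gam m \<le> gam k" using gam_mono_le[OF incr, of m k] k by simp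
    ultimately show "n \<le> k \<and> k < m" using k by (metis atLeastAtMost_iff greaterThanLessThan_iff not_le order.strict_trans1 order.strict_trans2 less_irrefl)
  next
    assume a: "n \<le> k \<and> k < m"
    then have "gam n \<le> gam k" "gam (Suc k) \<le> gam m" using gam_mono_le[OF incr] nm by auto
    then show "x \<in> {gam n..gam m}" using k by auto
  qed
  show ?thesis using pw_at[OF incr k] iff unfolding restr_def by simp
qed

lemma restr_integral:
  assumes nm: "n \<le> m" "m \<le> ell"
  shows "integral {-b..b} (\<lambda>x. g x * pw ell gam (restr n m c) x) = integral {gam n..gam m} (\<lambda>x. g x * pw ell gam c x)"
proof -
  have sub: "{gam n..gam m} \<subseteq> {-b..b}"
    using gam_mono_le[OF incr, of 0 n] gam_mono_le[OF incr, of m ell] nm g0 gell by auto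
  have "integral {-b..b} (\<lambda>x. g x * pw ell gam (restr n m c) x) =
      integral {-b..b} (\<lambda>x. if x \<in> {gam n..gam m} then g x * pw ell gam c x else 0)"
    unfolding restr_eq[OF nm] by (intro integral_cong) auto
  also have "\<dots> = integral ({gam n..gam m} \<inter> {-b..b}) (\<lambda>x. g x * pw ell gam c x)"
    by (rule Henstock_Kurzweil_Integration.integral_restrict_Int)
  also have "{gam n..gam m} \<inter> {-b..b} = {gam n..gam m}" using sub by auto
  finally show ?thesis .
qed

lemma restr_Usp:
  assumes "\<forall>j<ell. c j \<in> Vspan l \<and> C1fun (c j)"
  shows "pw ell gam (restr n m c) \<in> Usp l ell gam"
  unfolding Usp_def restr_def using assms V_zero C1_zero by auto

end



context
  fixes b :: real and ell :: nat and gam :: "nat \<Rightarrow> real"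
  assumes incr: "\<forall>j<ell. gam j < gam (Suc j)"
    and g0: "gam 0 = - b" and gell: "gam ell = b"
begin

lemma deriv_grid:
  assumes restr: "\<forall>x\<in>{- b..b}. gval ell gam (pw ell gam c) x = F x"
    and k: "k < ell" and x: "x \<in> {gam k<..<gam (Suc k)}"
  shows "deriv (c k) x = deriv F x"
proof (rule deriv_cong_ev[OF _ refl])
  have "eventually (\<lambda>y. y \<in> {gam k<..<gam (Suc k)}) (nhds x)"
    using x by (intro eventually_nhds_in_open) auto
  then show "eventually (\<lambda>y. c k y = F y) (nhds x)"
    by eventually_elim (rule coef_eq[OF incr g0 gell restr k])
qed

lemma PC_deriv: "\<forall>j<ell. C1fun (c j) \<Longrightarrow> PC ell gam (pw ell gam (\<lambda>j. deriv (c j)))"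
  unfolding PC_def C1fun_def by blast

lemma Usp_pw: "\<forall>j<ell. c j \<in> Vspan l \<and> C1fun (c j) \<Longrightarrow> pw ell gam c \<in> Usp l ell gam"
  unfolding Usp_def by blast

lemma half:
  assumes fl: "finite l"
    and cu: "\<forall>j<ell. cu j \<in> Vspan l \<and> C1fun (cu j)"
    and cv: "\<forall>j<ell. cv j \<in> Vspan l \<and> C1fun (cv j)"
    and nm: "n \<le> m" "m \<le> ell"
  shows "integral {gam n..gam m} (\<lambda>x. Pproj l b ell gam (pw ell gam (\<lambda>j. deriv (cu j))) x * pw ell gam cv x)
       = integral {gam n..gam m} (\<lambda>x. pw ell gam (\<lambda>j. deriv (cu j)) x * pw ell gam cv x)"
proof -
  let ?fU = "pw ell gam (\<lambda>j. deriv (cu j))"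
  let ?PU = "Pproj l b ell gam ?fU"
  let ?V = "pw ell gam cv"
  have PCfU: "PC ell gam ?fU" using PC_deriv cu by blast
  have P: "?PU \<in> Usp l ell gam \<and> (\<forall>w\<in>Usp l ell gam. integral {-b..b} (\<lambda>x. (?fU x - ?PU x) * w x) = 0)"
    by (rule Pproj_prop[OF incr g0 gell fl PCfU])
  have PCPU: "PC ell gam ?PU" using P Usp_PC by blast
  have PCV: "PC ell gam ?V" using Usp_PC Usp_pw[OF cv] by blast
  have "integral {-b..b} (\<lambda>x. (?fU x - ?PU x) * pw ell gam (restr n m cv) x) = 0"
    using P restr_Usp[OF incr g0 gell cv] by blast
  then have "integral {gam n..gam m} (\<lambda>x. (?fU x - ?PU x) * ?V x) = 0"
    unfolding restr_integral[OF incr g0 gell nm] .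
  moreover have "integral {gam n..gam m} (\<lambda>x. (?fU x - ?PU x) * ?V x) =
      integral {gam n..gam m} (\<lambda>x. ?fU x * ?V x) - integral {gam n..gam m} (\<lambda>x. ?PU x * ?V x)"
    unfolding left_diff_distrib
    by (intro integral_diff PC_prod_integrable[OF incr] PCfU PCPU PCV)
  ultimately show ?thesis by simp
qed

lemma main_std:
  assumes fl: "finite l"
    and cu: "\<forall>j<ell. cu j \<in> Vspan l \<and> C1fun (cu j)"
    and cv: "\<forall>j<ell. cv j \<in> Vspan l \<and> C1fun (cv j)"
    and fu: "C1fun fu" "\<forall>x\<in>{- b..b}. gval ell gam (pw ell gam cu) x = fu x"
    and fv: "C1fun fv" "\<forall>x\<in>{- b..b}. gval ell gam (pw ell gam cv) x = fv x"
    and nm: "n < m" "m \<le> ell"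
  shows "integral {gam n..gam m}
        (\<lambda>x. Dop l b ell gam cu x * pw ell gam cv x)
   = - integral {gam n..gam m}
        (\<lambda>x. pw ell gam cu x * Dop l b ell gam cv x)
     + llim (pw ell gam cu) (gam m) * llim (pw ell gam cv) (gam m)
     - rlim (pw ell gam cu) (gam n) * rlim (pw ell gam cv) (gam n)"
proof -
  let ?U = "pw ell gam cu" and ?V = "pw ell gam cv"
  let ?fU = "pw ell gam (\<lambda>j. deriv (cu j))" and ?fV = "pw ell gam (\<lambda>j. deriv (cv j))"
  let ?PU = "Pproj l b ell gam ?fU" and ?PV = "Pproj l b ell gam ?fV"
  let ?N = "gam n" and ?M = "gam m"
  have nm': "n \<le> m" using nm by simp
  have NM: "?N \<le> ?M" using gam_mono_le[OF incr nm' nm(2)] .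
  have PCU: "PC ell gam ?U" using Usp_PC Usp_pw[OF cu] by blast
  have PCV: "PC ell gam ?V" using Usp_PC Usp_pw[OF cv] by blast
  have PCfU: "PC ell gam ?fU" using PC_deriv cu by blast
  have PCfV: "PC ell gam ?fV" using PC_deriv cv by blast
  have E1: "integral {?N..?M} (\<lambda>x. Dop l b ell gam cu x * ?V x) = integral {?N..?M} (\<lambda>x. ?fU x * ?V x)"
    unfolding Dop_eq[OF incr g0 gell fu(2) fu(1)] using half[OF fl cu cv nm' nm(2)] .
  have E2: "integral {?N..?M} (\<lambda>x. ?U x * Dop l b ell gam cv x) = integral {?N..?M} (\<lambda>x. ?fV x * ?U x)"
    unfolding Dop_eq[OF incr g0 gell fv(2) fv(1)] using half[OF fl cv cu nm' nm(2)]
    by (simp add: mult.commute)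
  have FTC: "((\<lambda>x. deriv fu x * fv x + deriv fv x * fu x) has_integral (fu ?M * fv ?M - fu ?N * fv ?N)) {?N..?M}"
  proof (rule fundamental_theorem_of_calculus[OF NM])
    fix x assume "x \<in> {?N..?M}"
    have "((\<lambda>x. fu x * fv x) has_real_derivative (deriv fu x * fv x + deriv fv x * fu x)) (at x)"
      by (intro DERIV_mult C1_deriv fu(1) fv(1))
    then show "((\<lambda>x. fu x * fv x) has_vector_derivative (deriv fu x * fv x + deriv fv x * fu x)) (at x within {?N..?M})"
      unfolding has_real_derivative_iff_has_vector_derivative by (rule has_vector_derivative_at_within)
  qed
  have FTC2: "((\<lambda>x. ?fU x * ?V x + ?fV x * ?U x) has_integral (fu ?M * fv ?M - fu ?N * fv ?N)) {?N..?M}"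
  proof (rule has_integral_spike_finite[OF _ _ FTC])
    show "finite (gam ` {..ell})" by simp
  next
    fix x assume x: "x \<in> {?N..?M} - gam ` {..ell}"
    have "gam 0 \<le> ?N" using gam_mono_le[OF incr, of 0 n] nm by simp
    moreover have "?M \<le> gam ell" using gam_mono_le[OF incr, of m ell] nm by simp
    ultimately obtain k where k: "k < ell" "x \<in> {gam k<..<gam (Suc k)}"
      using find_int[OF incr, of x] x by auto
    show "?fU x * ?V x + ?fV x * ?U x = deriv fu x * fv x + deriv fv x * fu x"
      unfolding pw_at[OF incr k]
      using deriv_grid[OF fu(2) k] deriv_grid[OF fv(2) k] coef_eq[OF incr g0 gell fu(2) k] coef_eq[OF incr g0 gell fv(2) k]
      by simp
  qed
  have sum: "integral {?N..?M} (\<lambda>x. ?fU x * ?V x + ?fV x * ?U x) =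
      integral {?N..?M} (\<lambda>x. ?fU x * ?V x) + integral {?N..?M} (\<lambda>x. ?fV x * ?U x)"
    by (intro integral_add PC_prod_integrable[OF incr] PCfU PCV PCfV PCU)
  have l1: "llim ?U ?M = fu ?M" "llim ?V ?M = fv ?M"
    using llim_grid[OF incr g0 gell fu(2) fu(1), of "m - 1"] llim_grid[OF incr g0 gell fv(2) fv(1), of "m - 1"] nm
    by auto
  have r1: "rlim ?U ?N = fu ?N" "rlim ?V ?N = fv ?N"
    using rlim_grid[OF incr g0 gell fu(2) fu(1), of n] rlim_grid[OF incr g0 gell fv(2) fv(1), of n] nm
    by auto
  show ?thesis
    unfolding E1 E2 l1 r1 using integral_unique[OF FTC2] sum by (simp add: algebra_simps)
qed

end

theorem mainTheorem12:
  fixes F :: "idx filter"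
    and beta eta :: "idx \<Rightarrow> real"
    and ell n m :: "idx \<Rightarrow> nat"
    and gam :: "idx \<Rightarrow> nat \<Rightarrow> real"
    and cu cv :: "idx \<Rightarrow> nat \<Rightarrow> real \<Rightarrow> real"
    and fu fv :: "idx \<Rightarrow> real \<Rightarrow> real"
  assumes LF: "Lambda_filter F"
    and beta_inf: "\<forall>r::real. eventually (\<lambda>l. beta l > r) F"
    and eta_infinitesimal: "\<forall>r::real. r > 0 \<longrightarrow> eventually (\<lambda>l. 0 < eta l \<and> eta l < r) F"
    and grid: "eventually (\<lambda>l. gam l 0 = - beta l \<and> gam l (ell l) = beta l \<and>
                 (\<forall>j<ell l. 0 < gam l (Suc j) - gam l j \<and> gam l (Suc j) - gam l j < eta l)) F"
    and reals_in_grid: "\<forall>r::real. eventually (\<lambda>l. \<exists>j\<le>ell l. gam l j = r) F"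
    and u_in_U: "eventually (\<lambda>l. \<forall>j<ell l. cu l j \<in> Vspan l \<and> C1fun (cu l j)) F"
    and v_in_U: "eventually (\<lambda>l. \<forall>j<ell l. cv l j \<in> Vspan l \<and> C1fun (cv l j)) F"
    and u_restr: "eventually (\<lambda>l. C1fun (fu l) \<and>
                 (\<forall>x\<in>{- beta l..beta l}. gval (ell l) (gam l) (pw (ell l) (gam l) (cu l)) x = fu l x)) F"
    and v_restr: "eventually (\<lambda>l. C1fun (fv l) \<and>
                 (\<forall>x\<in>{- beta l..beta l}. gval (ell l) (gam l) (pw (ell l) (gam l) (cv l)) x = fv l x)) F"
    and nm: "eventually (\<lambda>l. n l < m l \<and> m l \<le> ell l) F"
  shows "eventually (\<lambda>l.
     integral {gam l (n l)..gam l (m l)}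
        (\<lambda>x. Dop l (beta l) (ell l) (gam l) (cu l) x * pw (ell l) (gam l) (cv l) x)
   = - integral {gam l (n l)..gam l (m l)}
        (\<lambda>x. pw (ell l) (gam l) (cu l) x * Dop l (beta l) (ell l) (gam l) (cv l) x)
     + llim (pw (ell l) (gam l) (cu l)) (gam l (m l)) * llim (pw (ell l) (gam l) (cv l)) (gam l (m l))
     - rlim (pw (ell l) (gam l) (cu l)) (gam l (n l)) * rlim (pw (ell l) (gam l) (cv l)) (gam l (n l))) F"
proof -
  have fin0: "eventually (\<lambda>mu. finite mu \<and> {} \<subseteq> mu) F"
    using LF unfolding Lambda_filter_def by blast
  have fin: "eventually (\<lambda>l. finite l) F" using fin0 by (rule eventually_mono) simp
  show ?thesis
    using grid u_in_U v_in_U u_restr v_restr nm fin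
  proof eventually_elim
    case (elim l)
    have incr: "\<forall>j<ell l. gam l j < gam l (Suc j)" using elim(1) by auto
    show ?case
      by (rule main_std[OF incr conjunct1[OF elim(1)] conjunct1[OF conjunct2[OF elim(1)]]
            elim(7) elim(2) elim(3) conjunct1[OF elim(4)] conjunct2[OF elim(4)]
            conjunct1[OF elim(5)] conjunct2[OF elim(5)] conjunct1[OF elim(6)] conjunct2[OF elim(6)]])
  qed
qed


end
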